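(* Fix $k\ge0$ and let $\Lambda$ be a locally convex $(k+1)$-graph with $\Gamma=d^{-1}(\mathbb N^k\times\{0\})$. If $v\in\Lambda^0$ and $F\subseteq v\Gamma$ is a finite set that is exhaustive in $\Gamma$, then $F$ is exhaustive in $\Lambda$.
   Context: A $(k+1)$-graph is a countable small category $\Lambda$ with a functor $d:\Lambda\to\mathbb N^{k+1}$ such that whenever $d(\lambda)=m+n$ there are unique $\mu,\nu$ with $\lambda=\mu\nu$, $d(\mu)=m$, $d(\nu)=n$; $\Lambda^n=d^{-1}(n)$, $e_i$ the standard basis vectors. $\Lambda$ is locally convex if for $i\ne j$, whenever $e\in\Lambda^{e_i}$ and $r(e)\Lambda^{e_j}\ne\emptyset$, we have $s(e)\Lambda^{e_j}\ne\emptyset$. $\Gamma$ is a $k$-graph (subcategory). For a category $\mathcal C$ and $v\in\mathcal C^0$, $F\subseteq v\mathcal C$ is exhaustive in $\mathcal C$ if for every $c\in v\mathcal C$ there is $a\in F$ with $c\mathcal C\cap a\mathcal C\ne\emptyset$. *)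

theory Defs
  imports "HOL-Library.Countable_Set"
begin

text \<open>Degrees in \<open>\<nat>^n\<close> are represented as functions \<open>nat \<Rightarrow> nat\<close> vanishing at
  indices \<open>\<ge> n\<close>; coordinates are indexed \<open>0,\<dots>,n-1\<close>.\<close>

definition dadd :: "(nat \<Rightarrow> nat) \<Rightarrow> (nat \<Rightarrow> nat) \<Rightarrow> nat \<Rightarrow> nat" where
  "dadd m p = (\<lambda>i. m i + p i)"

definition basis :: "nat \<Rightarrow> nat \<Rightarrow> nat" where
  "basis i = (\<lambda>j. if j = i then 1 else 0)"

definition is_category ::
  "'v set \<Rightarrow> 'a set \<Rightarrow> ('a \<Rightarrow> 'v) \<Rightarrow> ('a \<Rightarrow> 'v) \<Rightarrow> ('a \<Rightarrow> 'a \<Rightarrow> 'a) \<Rightarrow> ('v \<Rightarrow> 'a) \<Rightarrow> bool" where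
  "is_category Obj Mor r s cmp idm \<longleftrightarrow>
     (\<forall>\<mu>\<in>Mor. r \<mu> \<in> Obj \<and> s \<mu> \<in> Obj) \<and>
     (\<forall>v\<in>Obj. idm v \<in> Mor \<and> r (idm v) = v \<and> s (idm v) = v) \<and>
     (\<forall>\<mu>\<in>Mor. \<forall>\<nu>\<in>Mor. s \<mu> = r \<nu> \<longrightarrow>
        cmp \<mu> \<nu> \<in> Mor \<and> r (cmp \<mu> \<nu>) = r \<mu> \<and> s (cmp \<mu> \<nu>) = s \<nu>) \<and>
     (\<forall>\<mu>\<in>Mor. cmp (idm (r \<mu>)) \<mu> = \<mu> \<and> cmp \<mu> (idm (s \<mu>)) = \<mu>) \<and>
     (\<forall>\<mu>\<in>Mor. \<forall>\<nu>\<in>Mor. \<forall>\<rho>\<in>Mor. s \<mu> = r \<nu> \<longrightarrow> s \<nu> = r \<rho> \<longrightarrow>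
        cmp (cmp \<mu> \<nu>) \<rho> = cmp \<mu> (cmp \<nu> \<rho>))"

definition is_kgraph ::
  "nat \<Rightarrow> 'v set \<Rightarrow> 'a set \<Rightarrow> ('a \<Rightarrow> 'v) \<Rightarrow> ('a \<Rightarrow> 'v) \<Rightarrow> ('a \<Rightarrow> 'a \<Rightarrow> 'a) \<Rightarrow> ('v \<Rightarrow> 'a)
     \<Rightarrow> ('a \<Rightarrow> nat \<Rightarrow> nat) \<Rightarrow> bool" where
  "is_kgraph n Obj Mor r s cmp idm d \<longleftrightarrow>
     is_category Obj Mor r s cmp idm \<and> countable Obj \<and> countable Mor \<and>
     (\<forall>\<mu>\<in>Mor. \<forall>i\<ge>n. d \<mu> i = 0) \<and>
     (\<forall>v\<in>Obj. d (idm v) = (\<lambda>_. 0)) \<and>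
     (\<forall>\<mu>\<in>Mor. \<forall>\<nu>\<in>Mor. s \<mu> = r \<nu> \<longrightarrow> d (cmp \<mu> \<nu>) = dadd (d \<mu>) (d \<nu>)) \<and>
     (\<forall>l\<in>Mor. \<forall>m p. d l = dadd m p \<longrightarrow>
        (\<exists>\<mu>\<in>Mor. \<exists>\<nu>\<in>Mor. s \<mu> = r \<nu> \<and> cmp \<mu> \<nu> = l \<and> d \<mu> = m \<and> d \<nu> = p \<and>
          (\<forall>\<mu>'\<in>Mor. \<forall>\<nu>'\<in>Mor. s \<mu>' = r \<nu>' \<and> cmp \<mu>' \<nu>' = l \<and> d \<mu>' = m \<and> d \<nu>' = p
             \<longrightarrow> \<mu>' = \<mu> \<and> \<nu>' = \<nu>)))"

definition locally_convex ::
  "nat \<Rightarrow> 'a set \<Rightarrow> ('a \<Rightarrow> 'v) \<Rightarrow> ('a \<Rightarrow> 'v) \<Rightarrow> ('a \<Rightarrow> nat \<Rightarrow> nat) \<Rightarrow> bool" where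
  "locally_convex n Mor r s d \<longleftrightarrow>
     (\<forall>i<n. \<forall>j<n. i \<noteq> j \<longrightarrow> (\<forall>e\<in>Mor. d e = basis i \<longrightarrow>
        (\<exists>f\<in>Mor. r f = r e \<and> d f = basis j) \<longrightarrow>
        (\<exists>f\<in>Mor. r f = s e \<and> d f = basis j)))"

text \<open>\<open>F\<close> (assumed \<open>\<subseteq> v C\<close>) is exhaustive in the category with morphism set \<open>C\<close>:
  every \<open>c \<in> vC\<close> has some \<open>a \<in> F\<close> with \<open>cC \<inter> aC \<noteq> \<emptyset>\<close>.\<close>

definition exhaustive ::
  "'a set \<Rightarrow> ('a \<Rightarrow> 'v) \<Rightarrow> ('a \<Rightarrow> 'v) \<Rightarrow> ('a \<Rightarrow> 'a \<Rightarrow> 'a) \<Rightarrow> 'v \<Rightarrow> 'a set \<Rightarrow> bool" where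
  "exhaustive C r s cmp v F \<longleftrightarrow>
     (\<forall>c\<in>C. r c = v \<longrightarrow> (\<exists>a\<in>F. \<exists>x\<in>C. \<exists>y\<in>C.
        s c = r x \<and> s a = r y \<and> cmp c x = cmp a y))"

end

theory Submission
  imports Defs
begin

locale kg =
  fixes n :: nat and Obj :: "'v set" and Mor :: "'a set" and r s :: "'a \<Rightarrow> 'v"
    and cmp :: "'a \<Rightarrow> 'a \<Rightarrow> 'a" and idm :: "'v \<Rightarrow> 'a" and d :: "'a \<Rightarrow> nat \<Rightarrow> nat"
  assumes kg: "is_kgraph n Obj Mor r s cmp idm d"
begin

lemmas defs = kg[unfolded is_kgraph_def is_category_def]

lemma rs: "\<mu>\<in>Mor \<Longrightarrow> r \<mu> \<in> Obj \<and> s \<mu> \<in> Obj" using defs by blast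
lemma idm: "v\<in>Obj \<Longrightarrow> idm v \<in> Mor \<and> r (idm v) = v \<and> s (idm v) = v" using defs by blast
lemma cmp: "\<mu>\<in>Mor \<Longrightarrow> \<nu>\<in>Mor \<Longrightarrow> s \<mu> = r \<nu> \<Longrightarrow> cmp \<mu> \<nu> \<in> Mor \<and> r (cmp \<mu> \<nu>) = r \<mu> \<and> s (cmp \<mu> \<nu>) = s \<nu>"
  using defs by blast
lemma idl: "\<mu>\<in>Mor \<Longrightarrow> cmp (idm (r \<mu>)) \<mu> = \<mu>" using defs by blast
lemma idr: "\<mu>\<in>Mor \<Longrightarrow> cmp \<mu> (idm (s \<mu>)) = \<mu>" using defs by blast
lemma assoc: "\<mu>\<in>Mor \<Longrightarrow> \<nu>\<in>Mor \<Longrightarrow> \<rho>\<in>Mor \<Longrightarrow> s \<mu> = r \<nu> \<Longrightarrow> s \<nu> = r \<rho> \<Longrightarrow>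
        cmp (cmp \<mu> \<nu>) \<rho> = cmp \<mu> (cmp \<nu> \<rho>)" using defs by blast
lemma dhigh: "\<mu>\<in>Mor \<Longrightarrow> i \<ge> n \<Longrightarrow> d \<mu> i = 0" using defs by blast
lemma didm: "v\<in>Obj \<Longrightarrow> d (idm v) = (\<lambda>_. 0)" using defs by blast
lemma dcmp: "\<mu>\<in>Mor \<Longrightarrow> \<nu>\<in>Mor \<Longrightarrow> s \<mu> = r \<nu> \<Longrightarrow> d (cmp \<mu> \<nu>) = dadd (d \<mu>) (d \<nu>)"
  using defs by blast
lemma factor: "l\<in>Mor \<Longrightarrow> d l = dadd m p \<Longrightarrow>
   \<exists>\<mu>\<in>Mor. \<exists>\<nu>\<in>Mor. s \<mu> = r \<nu> \<and> cmp \<mu> \<nu> = l \<and> d \<mu> = m \<and> d \<nu> = p"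
  using defs by blast

lemma uniq:
  assumes "\<mu>\<in>Mor" "\<nu>\<in>Mor" "\<mu>'\<in>Mor" "\<nu>'\<in>Mor" "s \<mu> = r \<nu>" "s \<mu>' = r \<nu>'"
    "cmp \<mu> \<nu> = cmp \<mu>' \<nu>'" "d \<mu> = d \<mu>'" "d \<nu> = d \<nu>'"
  shows "\<mu> = \<mu>' \<and> \<nu> = \<nu>'"
proof -
  have l: "cmp \<mu> \<nu> \<in> Mor" "d (cmp \<mu> \<nu>) = dadd (d \<mu>) (d \<nu>)" using assms cmp dcmp by auto
  have "\<forall>l\<in>Mor. \<forall>m p. d l = dadd m p \<longrightarrow>
        (\<exists>\<mu>\<in>Mor. \<exists>\<nu>\<in>Mor. s \<mu> = r \<nu> \<and> cmp \<mu> \<nu> = l \<and> d \<mu> = m \<and> d \<nu> = p \<and>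
          (\<forall>\<mu>'\<in>Mor. \<forall>\<nu>'\<in>Mor. s \<mu>' = r \<nu>' \<and> cmp \<mu>' \<nu>' = l \<and> d \<mu>' = m \<and> d \<nu>' = p
             \<longrightarrow> \<mu>' = \<mu> \<and> \<nu>' = \<nu>))" using defs by blast
  then obtain \<mu>0 \<nu>0 where U: "\<forall>\<mu>'\<in>Mor. \<forall>\<nu>'\<in>Mor. s \<mu>' = r \<nu>' \<and> cmp \<mu>' \<nu>' = cmp \<mu> \<nu> \<and> d \<mu>' = d \<mu> \<and> d \<nu>' = d \<nu>
             \<longrightarrow> \<mu>' = \<mu>0 \<and> \<nu>' = \<nu>0" using l by blast
  show ?thesis using U[rule_format, of \<mu> \<nu>] U[rule_format, of \<mu>' \<nu>'] assms by auto
qed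

lemma deg0: assumes "\<mu>\<in>Mor" "d \<mu> = (\<lambda>_. 0)" shows "s \<mu> = r \<mu>"
proof -
  have o: "r \<mu> \<in> Obj" "s \<mu> \<in> Obj" using rs assms by auto
  have "idm (r \<mu>) = \<mu>"
    using uniq[of "idm (r \<mu>)" \<mu> \<mu> "idm (s \<mu>)"] o idm assms idl idr didm by auto
  then show ?thesis using idm o by metis
qed

lemma lc_path:
  assumes lc: "locally_convex n Mor r s d" and kn: "k<n" and jn: "j<n" and jk: "j\<noteq>k"
  shows "\<kappa>\<in>Mor \<Longrightarrow> d \<kappa> = (\<lambda>i. if i = k then m else 0) \<Longrightarrow> f\<in>Mor \<Longrightarrow> r f = r \<kappa> \<Longrightarrow> d f = basis j
     \<Longrightarrow> \<exists>g\<in>Mor. r g = s \<kappa> \<and> d g = basis j"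
proof (induction m arbitrary: \<kappa> f)
  case 0
  then have "d \<kappa> = (\<lambda>_. 0)" by auto
  then have "s \<kappa> = r \<kappa>" using deg0 0 by auto
  then show ?case using 0 by auto
next
  case (Suc m)
  have "d \<kappa> = dadd (basis k) (\<lambda>i. if i = k then m else 0)"
    using Suc.prems by (auto simp: dadd_def basis_def)
  then obtain e \<kappa>' where e: "e\<in>Mor" "\<kappa>'\<in>Mor" "s e = r \<kappa>'" "cmp e \<kappa>' = \<kappa>" "d e = basis k"
    "d \<kappa>' = (\<lambda>i. if i = k then m else 0)" using factor Suc.prems by blast
  have "r e = r \<kappa>" "s \<kappa>' = s \<kappa>" using cmp e by metis+
  then have "\<exists>g\<in>Mor. r g = s e \<and> d g = basis j"
  proof -
    have L: "\<forall>e\<in>Mor. d e = basis k \<longrightarrow>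
        (\<exists>f\<in>Mor. r f = r e \<and> d f = basis j) \<longrightarrow>
        (\<exists>f\<in>Mor. r f = s e \<and> d f = basis j)"
      using lc kn jn jk unfolding locally_convex_def by blast
    have "\<exists>f\<in>Mor. r f = r e \<and> d f = basis j"
      using Suc.prems \<open>r e = r \<kappa>\<close> by auto
    then show ?thesis using L e by blast
  qed
  then obtain g where "g\<in>Mor" "r g = r \<kappa>'" "d g = basis j" using e by auto
  then show ?case using Suc.IH[of \<kappa>' g] e \<open>s \<kappa>' = s \<kappa>\<close> by auto
qed

end

theorem lemma3p17:
  fixes k :: nat
    and Obj :: "'v set" and Mor :: "'a set"
    and r s :: "'a \<Rightarrow> 'v" and cmp :: "'a \<Rightarrow> 'a \<Rightarrow> 'a" and idm :: "'v \<Rightarrow> 'a"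
    and d :: "'a \<Rightarrow> nat \<Rightarrow> nat"
    and v :: 'v and F :: "'a set"
  assumes "is_kgraph (Suc k) Obj Mor r s cmp idm d"
    and "locally_convex (Suc k) Mor r s d"
    and "v \<in> Obj"
    and "finite F"
    and "F \<subseteq> {\<mu> \<in> Mor. d \<mu> k = 0 \<and> r \<mu> = v}"
    and "exhaustive {\<mu> \<in> Mor. d \<mu> k = 0} r s cmp v F"
  shows "exhaustive Mor r s cmp v F"
proof -
  interpret kg "Suc k" Obj Mor r s cmp idm d using assms(1) by unfold_locales
  note lc = assms(2) and FF = assms(5) and ex = assms(6)[unfolded exhaustive_def]
  define M where "M = Max (insert 0 ((\<lambda>(a,j). d a j) ` (F \<times> {..<k})))"
  have Mb: "a\<in>F \<Longrightarrow> j<k \<Longrightarrow> d a j \<le> M" for a j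
    unfolding M_def using assms(4) by (intro Max_ge) auto
  define meas where "meas p = (\<Sum>j<k. M - min M (d p j))" for p
  have main: "\<And>p. p\<in>Mor \<Longrightarrow> r p = v \<Longrightarrow> (\<exists>a\<in>F. \<exists>w\<in>Mor. \<exists>y\<in>Mor. s p = r w \<and> s a = r y \<and> cmp p w = cmp a y)"
  proof -
    fix p0 show "p0\<in>Mor \<Longrightarrow> r p0 = v \<Longrightarrow> (\<exists>a\<in>F. \<exists>w\<in>Mor. \<exists>y\<in>Mor. s p0 = r w \<and> s a = r y \<and> cmp p0 w = cmp a y)"
    proof (induction "meas p0" arbitrary: p0 rule: less_induct)
      case (less p)
      have "d p = dadd (\<lambda>i. if i = k then 0 else d p i) (\<lambda>i. if i = k then d p k else 0)"
        by (auto simp: dadd_def)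
      then obtain \<gamma> \<kappa> where gk: "\<gamma>\<in>Mor" "\<kappa>\<in>Mor" "s \<gamma> = r \<kappa>" "cmp \<gamma> \<kappa> = p"
        "d \<gamma> = (\<lambda>i. if i = k then 0 else d p i)" "d \<kappa> = (\<lambda>i. if i = k then d p k else 0)"
        using factor less.prems by blast
      have rg: "r \<gamma> = v" "s \<kappa> = s p" using cmp gk less.prems by metis+
      obtain a x y where axy: "a\<in>F" "x\<in>Mor" "d x k = 0" "y\<in>Mor" "d y k = 0" "s \<gamma> = r x" "s a = r y"
        "cmp \<gamma> x = cmp a y"
        using ex gk rg by auto
      have aM: "a \<in> Mor" "d a k = 0" "r a = v" using FF axy by auto
      have deq: "d \<gamma> i + d x i = d a i + d y i" for i
        using dcmp[of \<gamma> x] dcmp[of a y] axy aM gk by (auto simp: dadd_def fun_eq_iff)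
      show ?case
      proof (cases "\<forall>j<k. d a j \<le> d \<gamma> j")
        case True
        have le: "d a i \<le> d \<gamma> i" for i
        proof -
          consider "i < k" | "i = k" | "i \<ge> Suc k" by linarith
          then show ?thesis using True aM dhigh[of a i] by cases auto
        qed
        have "d y = dadd (\<lambda>i. d \<gamma> i - d a i) (d x)"
          using deq le by (auto simp: dadd_def fun_eq_iff)
        then obtain y1 y2 where y: "y1\<in>Mor" "y2\<in>Mor" "s y1 = r y2" "cmp y1 y2 = y"
          "d y1 = (\<lambda>i. d \<gamma> i - d a i)" "d y2 = d x" using factor axy by blast
        have c1: "cmp a y1 \<in> Mor" "s (cmp a y1) = s y1" "r y1 = s a"
          using cmp y axy aM by metis+
        have "cmp \<gamma> x = cmp (cmp a y1) y2" using assoc y axy aM c1 by metis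
        moreover have "d (cmp a y1) = d \<gamma>" using dcmp[of a y1] aM y c1 le
          by (auto simp: dadd_def fun_eq_iff)
        ultimately have g: "\<gamma> = cmp a y1" using uniq[of \<gamma> x "cmp a y1" y2] gk axy c1 y by auto
        have sy1: "s y1 = r \<kappa>" using c1 g gk by metis
        have pe: "p = cmp a (cmp y1 \<kappa>)" using gk g assoc aM y c1 sy1 by metis
        have sp: "s p \<in> Obj" using rs less.prems by auto
        show ?thesis
          apply (rule bexI[OF _ axy(1)])
          apply (rule bexI[of _ "idm (s p)"])
           apply (rule bexI[of _ "cmp y1 \<kappa>"])
          using idm[OF sp] idr less.prems pe cmp[of y1 \<kappa>] y gk sy1 c1 by auto
      next
        case False
        then obtain j where j: "j<k" "d \<gamma> j < d a j" by auto
        have "d x j \<ge> 1" using deq[of j] j by linarith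
        then have "d x = dadd (basis j) (\<lambda>i. d x i - basis j i)"
          by (auto simp: dadd_def basis_def fun_eq_iff)
        then obtain e x' where e: "e\<in>Mor" "x'\<in>Mor" "s e = r x'" "cmp e x' = x" "d e = basis j"
          using factor axy by blast
        have re: "r e = r \<kappa>" using cmp e gk axy by metis
        obtain f where f: "f\<in>Mor" "r f = s \<kappa>" "d f = basis j"
          using lc_path[OF lc, of k j \<kappa> "d p k" e] j gk e re by auto
        define p' where "p' = cmp p f"
        have p': "p' \<in> Mor" "r p' = v" "s p' = s f" "d p' = dadd (d p) (basis j)"
          using cmp[of p f] dcmp[of p f] f rg less.prems unfolding p'_def by auto
        have dpj: "d p j < M" using j gk Mb[OF axy(1) j(1)] by auto
        have "meas p' < meas p" unfolding meas_def
        proof (rule sum_strict_mono_ex1)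
          show "\<forall>i\<in>{..<k}. M - min M (d p' i) \<le> M - min M (d p i)"
            using p' by (auto simp: dadd_def)
          show "\<exists>i\<in>{..<k}. M - min M (d p' i) < M - min M (d p i)"
            using p' dpj j by (intro bexI[of _ j]) (auto simp: dadd_def basis_def)
        qed auto
        then obtain a' w y' where h: "a'\<in>F" "w\<in>Mor" "y'\<in>Mor" "s p' = r w" "s a' = r y'" "cmp p' w = cmp a' y'"
          using less.hyps p' by blast
        have "cmp p (cmp f w) = cmp a' y'" using h assoc[of p f w] f rg less.prems p' unfolding p'_def by metis
        moreover have "cmp f w \<in> Mor" "r (cmp f w) = s p" using cmp[of f w] h f rg p' by auto
        ultimately show ?thesis using h by (intro bexI[OF _ h(1)] bexI[of _ "cmp f w"] bexI[OF _ h(3)]) auto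
      qed
    qed
  qed
  show ?thesis unfolding exhaustive_def using main by blast
qed

end
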